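(* Assume the mixed-integer semidefinite program $$\min\{\langle C,X\rangle : \mathcal{A}(X)=b,\ X\succeq \mathbf{0},\ X_{ij}\in B_{ij}\ \forall (i,j)\in\mathcal{J}\}\qquad(\mathrm{MISDP})$$ is feasible with bounded feasible set $\mathcal{F}_{MISDP}$ and optimal value $z_{MISDP}$. Let $\mathcal{F}_{SDP}=\{X:\mathcal{A}(X)=b,\ X\succeq\mathbf{0},\ l_{ij}\le X_{ij}\le u_{ij}\ \forall(i,j)\in\mathcal{J}\}$ with $z_{SDP}=\min\{\langle C,X\rangle: X\in\mathcal{F}_{SDP}\}$, and $\mathcal{F}_{LD}=\{X:\mathcal{A}_1(X)=b_1,\ X\succeq\mathbf{0},\ X\in\mathrm{conv}(P)\}$ with $z_{LD}=\min\{\langle C,X\rangle: X\in\mathcal{F}_{LD}\}$. Let $\chi^*_{MISDP}$ and $\chi^*_{LD}$ be the sets of optimal solutions of (MISDP) and of $\min\{\langle C,X\rangle:X\in\mathcal{F}_{LD}\}$, respectively. Then (i) $z_{LD}=z_{MISDP}$ if and only if $-C\in\mathcal{N}_{\mathcal{F}_{LD}}(X^* )$ for all $X^*\in\chi^*_{MISDP}$; (ii) $z_{SDP}=z_{LD}$ if and only if $-C\in\mathcal{N}_{\mathcal{F}_{SDP}}(X^* )$ for all $X^*\in\chi^*_{LD}$.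
   Context: $\mathcal{S}^n$ denotes the real symmetric $n\times n$ matrices with $\langle X,Y\rangle=\mathrm{tr}(XY)$; $X\succeq\mathbf{0}$ means positive semidefinite. $C\in\mathcal{S}^n$, $b\in\mathbb{R}^m$, $\mathcal{A}:\mathcal{S}^n\to\mathbb{R}^m$ linear with $\mathcal{A}(X)_i=\langle A_i,X\rangle$. $\mathcal{J}\subseteq[n]\times[n]$ and for $(i,j)\in\mathcal{J}$, $B_{ij}\subseteq\mathbb{Z}$ is a finite set with smallest element $l_{ij}$ and largest element $u_{ij}$. The constraints $\mathcal{A}(X)=b$ are split into $\mathcal{A}_1(X)=b_1$ ($b_1\in\mathbb{R}^{m_1}$) and $\mathcal{A}_2(X)=b_2$, and $P=\{X\in\mathcal{S}^n:\mathcal{A}_2(X)=b_2,\ X_{ij}\in B_{ij}\ \forall(i,j)\in\mathcal{J}\}$, assumed bounded. (The value $z_{LD}$ coincides with the Lagrangian dual value $\sup_{S\succeq\mathbf{0},\lambda}\min_{X\in P}\{\langle C,X\rangle-\langle S,X\rangle+\lambda^\top(\mathcal{A}_1(X)-b_1)\}$.) For a convex set $K\subseteq\mathcal{S}^n$ and $X\in K$, the normal cone is $\mathcal{N}_K(X)=\{Z\in\mathcal{S}^n:\langle Z,X\rangle\ge\langle Z,Y\rangle\ \forall Y\in K\}$. *)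

theory Defs
  imports "HOL-Analysis.Analysis"
begin

type_synonym 'n mat = "real^'n^'n"

definition symm :: "'n::finite mat \<Rightarrow> bool" where
  "symm X \<longleftrightarrow> transpose X = X"

definition frob :: "'n::finite mat \<Rightarrow> 'n mat \<Rightarrow> real" where
  "frob X Y = trace (X ** Y)"

definition psd :: "'n::finite mat \<Rightarrow> bool" where
  "psd X \<longleftrightarrow> symm X \<and> (\<forall>v. 0 \<le> v \<bullet> (X *v v))"

definition normal_cone :: "'n::finite mat set \<Rightarrow> 'n mat \<Rightarrow> 'n mat set" where
  "normal_cone K X = {Z. symm Z \<and> (\<forall>Y\<in>K. frob Z X \<ge> frob Z Y)}"

definition lin_sat :: "('k \<Rightarrow> 'n::finite mat) \<Rightarrow> ('k \<Rightarrow> real) \<Rightarrow> 'n mat \<Rightarrow> bool" where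
  "lin_sat A b X \<longleftrightarrow> (\<forall>i. frob (A i) X = b i)"

text \<open>The problem data: constraints split into A1 (index 'k) and A2 (index 'l).\<close>
definition F_MISDP where
  "F_MISDP A1 b1 A2 b2 J B =
     {X. lin_sat A1 b1 X \<and> lin_sat A2 b2 X \<and> psd X \<and>
         (\<forall>(i,j)\<in>J. X $ i $ j \<in> real_of_int ` B i j)}"

definition F_SDP where
  "F_SDP A1 b1 A2 b2 J B =
     {X. lin_sat A1 b1 X \<and> lin_sat A2 b2 X \<and> psd X \<and>
         (\<forall>(i,j)\<in>J. real_of_int (Min (B i j)) \<le> X $ i $ j \<and>
                      X $ i $ j \<le> real_of_int (Max (B i j)))}"

definition P_set where
  "P_set A2 b2 J B =
     {X. symm X \<and> lin_sat A2 b2 X \<and> (\<forall>(i,j)\<in>J. X $ i $ j \<in> real_of_int ` B i j)}"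

definition F_LD where
  "F_LD A1 b1 A2 b2 J B =
     {X. lin_sat A1 b1 X \<and> psd X \<and> X \<in> convex hull (P_set A2 b2 J B)}"

text \<open>Optimal value (a minimum, attained in the setting of the theorem) and optimal solution set.\<close>
definition optval :: "'n::finite mat \<Rightarrow> 'n mat set \<Rightarrow> real" where
  "optval C F = (INF X\<in>F. frob C X)"

definition optset :: "'n::finite mat \<Rightarrow> 'n mat set \<Rightarrow> 'n mat set" where
  "optset C F = {X\<in>F. frob C X = optval C F}"

end

theory Submission
  imports Defs
begin

lemma frob_sum: "frob A X = (\<Sum>i\<in>UNIV. \<Sum>k\<in>UNIV. A$i$k * X$k$i)"
  unfolding frob_def trace_def matrix_matrix_mult_def by simp

lemma cont_frob: "continuous_on S (frob A)"
  unfolding frob_sum by (intro continuous_intros)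

lemma linear_frob: "linear (frob A)"
  by (rule linearI) (simp_all add: frob_sum sum.distrib distrib_left sum_distrib_left algebra_simps)

lemma frob_lin: "frob A (X + t *\<^sub>R D) = frob A X + t * frob A D"
  by (simp add: frob_sum sum.distrib distrib_left sum_distrib_left algebra_simps)

lemma frob_diff: "frob A (X - Y) = frob A X - frob A Y"
  by (simp add: frob_sum sum_subtractf right_diff_distrib)

lemma frob_neg: "frob (- A) X = - frob A X"
  by (simp add: frob_sum sum_negf)

lemma symm_iff: "symm X \<longleftrightarrow> (\<forall>i j. X$i$j = X$j$i)"
  unfolding symm_def transpose_def vec_eq_iff by auto

lemma symm_add: "symm X \<Longrightarrow> symm Y \<Longrightarrow> symm (X + Y)"
  unfolding symm_iff vector_add_component by metis
lemma symm_diff: "symm X \<Longrightarrow> symm Y \<Longrightarrow> symm (X - Y)"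
  unfolding symm_iff vector_minus_component by metis
lemma symm_scale: "symm X \<Longrightarrow> symm (c *\<^sub>R X)"
  unfolding symm_iff vector_scaleR_component by metis
lemma symm_0: "symm 0"
  unfolding symm_iff by simp

lemma closed_symm: "closed {X::real^'n::finite^'n. symm X}"
  unfolding symm_iff
  by (intro closed_Collect_all closed_Collect_eq continuous_intros)

lemma closed_lin: "closed {X. lin_sat A b X}"
  unfolding lin_sat_def
  by (intro closed_Collect_all closed_Collect_eq continuous_intros cont_frob)

lemma closed_psd: "closed {X::real^'n::finite^'n. psd X}"
proof -
  have "closed {X::real^'n^'n. \<forall>v. 0 \<le> v \<bullet> (X *v v)}"
    unfolding inner_vec_def matrix_vector_mult_def
    by (intro closed_Collect_all closed_Collect_le continuous_intros) 
  then show ?thesis unfolding psd_def using closed_Collect_conj[OF closed_symm] by blast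
qed

lemma closed_int:
  assumes "\<And>i j. (i, j) \<in> J \<Longrightarrow> finite (B i j)"
  shows "closed {X::real^'n::finite^'n. \<forall>(i,j)\<in>J. X $ i $ j \<in> real_of_int ` B i j}"
proof -
  have "{X::real^'n^'n. \<forall>(i,j)\<in>J. X $ i $ j \<in> real_of_int ` B i j}
     = (\<Inter>p\<in>J. \<Union>s\<in>B (fst p) (snd p). {X. X $ fst p $ snd p = real_of_int s})"
    by auto
  moreover have "closed (\<Inter>p\<in>J. \<Union>s\<in>B (fst p) (snd p). {X::real^'n^'n. X $ fst p $ snd p = real_of_int s})"
  proof (rule closed_INT, rule ballI)
    fix p assume "p \<in> J"
    then have "finite (B (fst p) (snd p))" using assms[of "fst p" "snd p"] by simp
    then show "closed (\<Union>s\<in>B (fst p) (snd p). {X::real^'n^'n. X $ fst p $ snd p = real_of_int s})"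
      by (intro closed_UN) (auto intro!: closed_Collect_eq continuous_intros)
  qed
  ultimately show ?thesis by simp
qed

lemma closed_bnd:
  "closed {X::real^'n::finite^'n. \<forall>(i,j)\<in>J. real_of_int (Min (B i j)) \<le> X $ i $ j \<and>
                      X $ i $ j \<le> real_of_int (Max (B i j))}"
proof -
  have "{X::real^'n^'n. \<forall>(i,j)\<in>J. real_of_int (Min (B i j)) \<le> X $ i $ j \<and>
                      X $ i $ j \<le> real_of_int (Max (B i j))}
     = (\<Inter>p\<in>J. {X. real_of_int (Min (B (fst p) (snd p))) \<le> X $ fst p $ snd p} \<inter>
                 {X. X $ fst p $ snd p \<le> real_of_int (Max (B (fst p) (snd p)))})"
    by fastforce
  moreover have "closed \<dots>"
    by (intro closed_INT ballI closed_Int closed_Collect_le continuous_intros)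
  ultimately show ?thesis by simp
qed

lemma optval_eq: "X \<in> F \<Longrightarrow> \<forall>Y\<in>F. frob C X \<le> frob C Y \<Longrightarrow> optval C F = frob C X"
  unfolding optval_def by (rule cInf_eq_minimum) auto

lemma bdd_frob: "bounded F \<Longrightarrow> bdd_below (frob C ` F)"
  by (intro bounded_imp_bdd_below bounded_linear_image)
     (auto simp: linear_conv_bounded_linear[symmetric] linear_frob)

lemma optval_le: "bounded F \<Longrightarrow> Y \<in> F \<Longrightarrow> optval C F \<le> frob C Y"
  unfolding optval_def by (rule cINF_lower) (auto intro: bdd_frob)

lemma normal_iff: "symm C \<Longrightarrow> (- C \<in> normal_cone K X) \<longleftrightarrow> (\<forall>Y\<in>K. frob C X \<le> frob C Y)"
  unfolding normal_cone_def by (auto simp: frob_neg symm_iff)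


lemma FSDP_bounded:
  fixes A1 :: "'k::finite \<Rightarrow> real^'n::finite^'n" and A2 :: "'l::finite \<Rightarrow> real^'n^'n"
  assumes bP: "bounded (P_set A2 b2 J B)"
    and X0P: "X0 \<in> P_set A2 b2 J B" and X0S: "X0 \<in> F_SDP A1 b1 A2 b2 J B"
  shows "bounded (F_SDP A1 b1 A2 b2 J B)"
proof -
  define S where "S = {D::real^'n^'n. symm D \<and> (\<forall>i. frob (A2 i) D = 0)}"
  define g where "g = (\<lambda>D::real^'n^'n. (\<chi> p. if p \<in> J then D $ fst p $ snd p else 0) :: real^('n\<times>'n))"
  have subS: "subspace S"
    unfolding subspace_def S_def
    by (simp add: symm_add symm_scale symm_0 linear_add[OF linear_frob] linear_scale[OF linear_frob]
                   linear_0[OF linear_frob])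
  have clS: "closed S"
    unfolding S_def using closed_Collect_conj[OF closed_symm closed_lin[of A2 "\<lambda>_. 0"]]
    by (simp add: Collect_conj_eq[symmetric] lin_sat_def)
  have lg: "linear g"
    by (rule linearI) (simp_all add: g_def vec_eq_iff)
  then have blg: "bounded_linear g" by (simp add: linear_conv_bounded_linear)
  have inj: "\<forall>x\<in>S. g x = 0 \<longrightarrow> x = 0"
  proof (intro ballI impI, rule ccontr)
    fix D assume DS: "D \<in> S" and gD: "g D = 0" and nz: "D \<noteq> 0"
    have DJ: "D $ i $ j = 0" if "(i, j) \<in> J" for i j
      proof -
        have "g D $ (i, j) = D $ i $ j" using that by (simp add: g_def)
        then show ?thesis using gD by simp
      qed
    have inP: "X0 + t *\<^sub>R D \<in> P_set A2 b2 J B" for t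
      using X0P DS DJ unfolding P_set_def S_def lin_sat_def
      by (auto simp: symm_add symm_scale frob_lin)
    obtain M where M: "M > 0" "\<And>x. x \<in> P_set A2 b2 J B \<Longrightarrow> norm x \<le> M"
      using bP by (auto simp: bounded_pos)
    define t where "t = (M + norm X0 + 1) / norm D"
    have nD: "norm D > 0" using nz by simp
    have "norm (t *\<^sub>R D) = M + norm X0 + 1"
      proof -
      have "t \<ge> 0" using nD M by (simp add: t_def)
      then have "norm (t *\<^sub>R D) = t * norm D" by simp
      also have "\<dots> = M + norm X0 + 1" using nD by (simp add: t_def)
      finally show ?thesis .
    qed
    moreover have "norm (t *\<^sub>R D) \<le> norm (X0 + t *\<^sub>R D) + norm X0"
      using norm_triangle_ineq4[of "X0 + t *\<^sub>R D" X0] by simp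
    moreover have "norm (X0 + t *\<^sub>R D) \<le> M" using M inP by blast
    ultimately show False by linarith
  qed
  obtain e where e: "e > 0" "\<And>x. x \<in> S \<Longrightarrow> norm (g x) \<ge> e * norm x"
    using injective_imp_isometric[OF clS subS blg inj] by auto
  define W where "W = (\<Sum>p\<in>UNIV. if p \<in> J then real_of_int (Max (B (fst p) (snd p)) - Min (B (fst p) (snd p))) else 0)"
  have "norm X \<le> norm X0 + W / e" if XS: "X \<in> F_SDP A1 b1 A2 b2 J B" for X
  proof -
    have dS: "X - X0 \<in> S"
      using XS X0S unfolding F_SDP_def S_def lin_sat_def psd_def
      by (simp add: symm_diff frob_diff)
    have "norm (g (X - X0)) \<le> (\<Sum>p\<in>UNIV. \<bar>g (X - X0) $ p\<bar>)" by (rule norm_le_l1_cart)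
    also have "\<dots> \<le> W" unfolding W_def
    proof (rule sum_mono)
      fix p :: "'n \<times> 'n"
      obtain i j where p: "p = (i, j)" by force
      show "\<bar>g (X - X0) $ p\<bar> \<le> (if p \<in> J then real_of_int (Max (B (fst p) (snd p)) - Min (B (fst p) (snd p))) else 0)"
        using XS X0S unfolding F_SDP_def g_def p by (fastforce simp: abs_le_iff)
    qed
    finally have "e * norm (X - X0) \<le> W" using e dS by (meson order_trans)
    then have "norm (X - X0) \<le> W / e" using e by (simp add: field_simps)
    moreover have "norm X \<le> norm X0 + norm (X - X0)"
      using norm_triangle_ineq[of X0 "X - X0"] by simp
    ultimately show ?thesis by linarith
  qed
  then show ?thesis unfolding bounded_iff by blast
qed


theorem theorem2:
  fixes C :: "real^'n::finite^'n"
    and A1 :: "'k::finite \<Rightarrow> real^'n^'n" and b1 :: "'k \<Rightarrow> real"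
    and A2 :: "'l::finite \<Rightarrow> real^'n^'n" and b2 :: "'l \<Rightarrow> real"
    and J :: "('n \<times> 'n) set" and B :: "'n \<Rightarrow> 'n \<Rightarrow> int set"
  assumes "symm C"
    and "\<And>i. symm (A1 i)" and "\<And>i. symm (A2 i)"
    and "\<And>i j. (i, j) \<in> J \<Longrightarrow> finite (B i j) \<and> B i j \<noteq> {}"
    and "bounded (P_set A2 b2 J B)"
    and "F_MISDP A1 b1 A2 b2 J B \<noteq> {}"
    and "bounded (F_MISDP A1 b1 A2 b2 J B)"
  shows "(optval C (F_LD A1 b1 A2 b2 J B) = optval C (F_MISDP A1 b1 A2 b2 J B)
            \<longleftrightarrow> (\<forall>X\<in>optset C (F_MISDP A1 b1 A2 b2 J B).
                   - C \<in> normal_cone (F_LD A1 b1 A2 b2 J B) X))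
       \<and> (optval C (F_SDP A1 b1 A2 b2 J B) = optval C (F_LD A1 b1 A2 b2 J B)
            \<longleftrightarrow> (\<forall>X\<in>optset C (F_LD A1 b1 A2 b2 J B).
                   - C \<in> normal_cone (F_SDP A1 b1 A2 b2 J B) X))"
proof -
  let ?FM = "F_MISDP A1 b1 A2 b2 J B"
  let ?FL = "F_LD A1 b1 A2 b2 J B"
  let ?FS = "F_SDP A1 b1 A2 b2 J B"
  let ?P = "P_set A2 b2 J B"
  note fin = assms(4)
  have PinS: "X \<in> ?P \<Longrightarrow> lin_sat A2 b2 X \<and> (\<forall>(i,j)\<in>J. real_of_int (Min (B i j)) \<le> X $ i $ j \<and>
                      X $ i $ j \<le> real_of_int (Max (B i j)))" for X
    unfolding P_set_def using fin by fastforce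
  have cvxQ: "convex {X. lin_sat A2 b2 X \<and> (\<forall>(i,j)\<in>J. real_of_int (Min (B i j)) \<le> X $ i $ j \<and>
                      X $ i $ j \<le> real_of_int (Max (B i j)))}"
  proof (rule convexI, simp only: mem_Collect_eq, intro conjI)
    fix x y :: "real^'n^'n" and u v :: real
    assume x: "lin_sat A2 b2 x \<and> (\<forall>(i,j)\<in>J. real_of_int (Min (B i j)) \<le> x $ i $ j \<and>
                      x $ i $ j \<le> real_of_int (Max (B i j)))"
      and y: "lin_sat A2 b2 y \<and> (\<forall>(i,j)\<in>J. real_of_int (Min (B i j)) \<le> y $ i $ j \<and>
                      y $ i $ j \<le> real_of_int (Max (B i j)))"
      and "0 \<le> u" "0 \<le> v" "u + v = 1"
    then have uv: "0 \<le> u \<and> 0 \<le> v \<and> u + v = 1" by simp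
    show "lin_sat A2 b2 (u *\<^sub>R x + v *\<^sub>R y)"
      using x y uv unfolding lin_sat_def
      by (simp add: linear_add[OF linear_frob] linear_scale[OF linear_frob] distrib_right[symmetric])
    show "\<forall>(i,j)\<in>J. real_of_int (Min (B i j)) \<le> (u *\<^sub>R x + v *\<^sub>R y) $ i $ j \<and>
                      (u *\<^sub>R x + v *\<^sub>R y) $ i $ j \<le> real_of_int (Max (B i j))"
    proof (intro ballI, clarify)
      fix i j assume ij: "(i, j) \<in> J"
      let ?m = "real_of_int (Min (B i j))" and ?M = "real_of_int (Max (B i j))"
      have a: "?m \<le> x$i$j" "x$i$j \<le> ?M" "?m \<le> y$i$j" "y$i$j \<le> ?M" using x y ij by auto
      have "u * ?m \<le> u * x$i$j" "v * ?m \<le> v * y$i$j" "u * x$i$j \<le> u * ?M" "v * y$i$j \<le> v * ?M"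
        using a uv by (simp_all add: mult_left_mono)
      moreover have "u * ?m + v * ?m = ?m" "u * ?M + v * ?M = ?M" using uv by (simp_all add: distrib_right[symmetric])
      ultimately show "?m \<le> (u *\<^sub>R x + v *\<^sub>R y) $ i $ j \<and> (u *\<^sub>R x + v *\<^sub>R y) $ i $ j \<le> ?M"
        by simp
    qed
  qed
  have hullQ: "convex hull ?P \<subseteq> {X. lin_sat A2 b2 X \<and> (\<forall>(i,j)\<in>J. real_of_int (Min (B i j)) \<le> X $ i $ j \<and>
                      X $ i $ j \<le> real_of_int (Max (B i j)))}"
    by (rule hull_minimal) (use PinS cvxQ in auto)
  have sub1: "?FM \<subseteq> ?FL"
  proof
    fix X assume "X \<in> ?FM"
    then have h: "lin_sat A1 b1 X" "psd X" "X \<in> ?P" unfolding F_MISDP_def P_set_def psd_def by auto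
    then show "X \<in> ?FL" unfolding F_LD_def using hull_inc[of X ?P convex] by auto
  qed
  have sub2: "?FL \<subseteq> ?FS"
    unfolding F_LD_def F_SDP_def using hullQ by blast
  have cI: "closed {X::real^'n^'n. \<forall>(i,j)\<in>J. X $ i $ j \<in> real_of_int ` B i j}"
    by (rule closed_int) (use fin in blast)
  have clP: "closed ?P"
  proof -
    have "?P = {X. symm X} \<inter> {X. lin_sat A2 b2 X} \<inter> {X. \<forall>(i,j)\<in>J. X $ i $ j \<in> real_of_int ` B i j}"
      unfolding P_set_def by blast
    then show ?thesis by (simp only:) (intro closed_Int closed_symm closed_lin cI)
  qed
  have cpP: "compact ?P" using clP assms(5) by (simp add: compact_eq_bounded_closed)
  have cpH: "compact (convex hull ?P)" using cpP by (rule compact_convex_hull)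
  have cpFL: "compact ?FL"
  proof -
    have "?FL = {X. lin_sat A1 b1 X} \<inter> {X. psd X} \<inter> convex hull ?P"
      unfolding F_LD_def by blast
    then have "closed ?FL" using compact_imp_closed[OF cpH] by (simp only:) (intro closed_Int closed_psd closed_lin)
    moreover have "bounded ?FL" using compact_imp_bounded[OF cpH] unfolding F_LD_def
      by (rule bounded_subset) blast
    ultimately show ?thesis by (simp add: compact_eq_bounded_closed)
  qed
  have cpFM: "compact ?FM"
  proof -
    have "?FM = {X. lin_sat A1 b1 X} \<inter> {X. lin_sat A2 b2 X} \<inter> {X. psd X} \<inter> {X. \<forall>(i,j)\<in>J. X $ i $ j \<in> real_of_int ` B i j}"
      unfolding F_MISDP_def by blast
    then have "closed ?FM" by (simp only:) (intro closed_Int closed_psd closed_lin cI)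
    then show ?thesis using assms(7) by (simp add: compact_eq_bounded_closed)
  qed
  obtain X0 where X0: "X0 \<in> ?FM" using assms(6) by blast
  have X0P: "X0 \<in> ?P" using X0 unfolding F_MISDP_def P_set_def psd_def by auto
  have bFS: "bounded ?FS"
    by (rule FSDP_bounded[OF assms(5) X0P]) (use X0 sub1 sub2 in blast)
  have bFL: "bounded ?FL" using cpFL compact_imp_bounded by blast
  obtain Xm where Xm: "Xm \<in> ?FM" "\<And>Y. Y \<in> ?FM \<Longrightarrow> frob C Xm \<le> frob C Y"
    using continuous_attains_inf[OF cpFM assms(6) cont_frob] by blast
  have FLne: "?FL \<noteq> {}" using Xm sub1 by blast
  obtain Xl where Xl: "Xl \<in> ?FL" "\<And>Y. Y \<in> ?FL \<Longrightarrow> frob C Xl \<le> frob C Y"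
    using continuous_attains_inf[OF cpFL FLne cont_frob] by blast
  have oM: "optval C ?FM = frob C Xm" using Xm by (intro optval_eq) auto
  have oL: "optval C ?FL = frob C Xl" using Xl by (intro optval_eq) auto
  have XmO: "Xm \<in> optset C ?FM" using Xm oM unfolding optset_def by auto
  have XlO: "Xl \<in> optset C ?FL" using Xl oL unfolding optset_def by auto
  note nc = normal_iff[OF assms(1)]
  have part1: "optval C ?FL = optval C ?FM \<longleftrightarrow> (\<forall>X\<in>optset C ?FM. - C \<in> normal_cone ?FL X)"
  proof
    assume eq: "optval C ?FL = optval C ?FM"
    show "\<forall>X\<in>optset C ?FM. - C \<in> normal_cone ?FL X"
    proof
      fix X assume "X \<in> optset C ?FM"
      then have "frob C X = optval C ?FL" using eq unfolding optset_def by simp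
      then show "- C \<in> normal_cone ?FL X" using nc optval_le[OF bFL] by simp
    qed
  next
    assume "\<forall>X\<in>optset C ?FM. - C \<in> normal_cone ?FL X"
    then have "\<forall>Y\<in>?FL. frob C Xm \<le> frob C Y" using XmO nc by blast
    then have "optval C ?FL = frob C Xm" using Xm sub1 by (intro optval_eq) auto
    then show "optval C ?FL = optval C ?FM" using oM by simp
  qed
  have part2: "optval C ?FS = optval C ?FL \<longleftrightarrow> (\<forall>X\<in>optset C ?FL. - C \<in> normal_cone ?FS X)"
  proof
    assume eq: "optval C ?FS = optval C ?FL"
    show "\<forall>X\<in>optset C ?FL. - C \<in> normal_cone ?FS X"
    proof
      fix X assume "X \<in> optset C ?FL"
      then have "frob C X = optval C ?FS" using eq unfolding optset_def by simp
      then show "- C \<in> normal_cone ?FS X" using nc optval_le[OF bFS] by simp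
    qed
  next
    assume "\<forall>X\<in>optset C ?FL. - C \<in> normal_cone ?FS X"
    then have "\<forall>Y\<in>?FS. frob C Xl \<le> frob C Y" using XlO nc by blast
    then have "optval C ?FS = frob C Xl" using Xl sub2 by (intro optval_eq) auto
    then show "optval C ?FS = optval C ?FL" using oL by simp
  qed
  show ?thesis using part1 part2 by blast
qed

end
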